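(* Let $n\ge1$ be an integer and $s$ a real parameter. Let $A_n$ be the $n\times n$ matrix with $(A_n)_{i,i}=i$ for $1\le i\le n$, $(A_n)_{i,i-1}=i-1$ for $2\le i\le n$, and all other entries $0$; let $B_n$ be the $n\times n$ matrix with $(B_n)_{i,i}=2i$ for $1\le i\le n$, $(B_n)_{i,i-1}=i-1$ for $2\le i\le n$, $(B_n)_{i,i+1}=-(n-i)$ for $1\le i\le n-1$, and all other entries $0$. Then the characteristic polynomial of $C_n(s):=(n+1)A_n+sB_n$ is $$\chi(C_n(s);z)=\det(zI_n-C_n(s))=\prod_{k=1}^n\big(z-(s+k)(n+1)\big).$$ *)

theory Defs
  imports "Jordan_Normal_Form.Char_Poly"
begin

text \<open>Matrices are n x n matrices of the Jordan_Normal_Form library, indexed 0..n-1.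
  We write a = i+1, b = j+1 for the paper's 1-based row and column indices.\<close>

definition A_mat :: "nat \<Rightarrow> real mat" where
  "A_mat n = mat n n (\<lambda>(i, j). let a = i + 1; b = j + 1 in
      if b = a then real a
      else if 2 \<le> a \<and> b = a - 1 then real (a - 1)
      else 0)"

definition B_mat :: "nat \<Rightarrow> real mat" where
  "B_mat n = mat n n (\<lambda>(i, j). let a = i + 1; b = j + 1 in
      if b = a then 2 * real a
      else if 2 \<le> a \<and> b = a - 1 then real (a - 1)
      else if a \<le> n - 1 \<and> b = a + 1 then - real (n - a)
      else 0)"

definition C_mat :: "nat \<Rightarrow> real \<Rightarrow> real mat" where
  "C_mat n s = real (n + 1) \<cdot>\<^sub>m A_mat n + s \<cdot>\<^sub>m B_mat n"

end

theory Submission imports Defs begin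
lemma C_entry:
  assumes "i < n" "j < n"
  shows "C_mat n s $$ (j, i) =
    (if i = j then (real (n+1) + 2*s) * real (j+1)
     else if i + 1 = j then (real (n+1) + s) * real j
     else if j + 1 = i then - s * real (n - i) else 0)"
  using assms unfolding C_mat_def A_mat_def B_mat_def
  by (auto simp: Let_def algebra_simps of_nat_diff)

definition Lop :: "nat \<Rightarrow> real \<Rightarrow> real poly \<Rightarrow> real poly" where
  "Lop n s p = [: real (n+1) + s, real (n+1) + 2*s, s :] * pderiv p
      + [: real (n+1) + 2*s, - s * real (n-1) :] * p"

lemma coeff_Lop:
  assumes "i < n"
  shows "coeff (Lop n s p) i = (real (n+1) + s) * real (i+1) * coeff p (i+1)
     + (real (n+1) + 2*s) * real (i+1) * coeff p i
     + (if i = 0 then 0 else - s * real (n - i) * coeff p (i - 1))"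
proof (cases i)
  case 0
  then show ?thesis by (simp add: Lop_def coeff_pderiv algebra_simps)
next
  case (Suc k)
  show ?thesis
  proof (cases k)
    case 0
    then show ?thesis using Suc assms by (simp add: Lop_def coeff_pderiv algebra_simps of_nat_diff)
  next
    case (Suc m)
    then show ?thesis using \<open>i = Suc k\<close> assms by (simp add: Lop_def coeff_pderiv algebra_simps of_nat_diff)
  qed
qed

lemma mult_T:
  assumes "degree p < n" "i < n"
  shows "(\<Sum>j<n. C_mat n s $$ (j, i) * coeff p j) = coeff (Lop n s p) i"
proof -
  have "(\<Sum>j<n. C_mat n s $$ (j, i) * coeff p j) =
    (\<Sum>j<n. (if j = i then (real (n+1) + 2*s) * real (i+1) * coeff p i else 0)
      + (if j = i + 1 then (real (n+1) + s) * real (i+1) * coeff p (i+1) else 0)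
      + (if j = i - 1 \<and> i \<noteq> 0 then - s * real (n - i) * coeff p (i - 1) else 0))"
    by (rule sum.cong, simp, auto simp: C_entry assms)
  also have "\<dots> = (real (n+1) + 2*s) * real (i+1) * coeff p i
     + (if i + 1 < n then (real (n+1) + s) * real (i+1) * coeff p (i+1) else 0)
     + (if i \<noteq> 0 then - s * real (n - i) * coeff p (i - 1) else 0)"
    using assms by (simp add: sum.distrib sum.delta' )
  also have "\<dots> = coeff (Lop n s p) i"
  proof -
    have "\<not> i + 1 < n \<Longrightarrow> coeff p (i+1) = 0" using assms by (intro coeff_eq_0) auto
    then show ?thesis using assms by (auto simp: coeff_Lop)
  qed
  finally show ?thesis .
qed

lemma p_pderiv_pow: "p * pderiv (p ^ a) = Polynomial.smult (of_nat a) (p ^ a * pderiv p)"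
proof (cases a)
  case (Suc m)
  have "p * pderiv (p ^ Suc m) = Polynomial.smult (of_nat (Suc m)) (p * p ^ m * pderiv p)"
    by (simp only: pderiv_power_Suc mult_smult_left mult_smult_right mult.assoc)
  then show ?thesis using Suc by simp
qed simp

definition ef :: "nat \<Rightarrow> real \<Rightarrow> nat \<Rightarrow> real poly" where
  "ef n s a = [:1,1:] ^ a * [: s + real (n+1), s :] ^ (n - 1 - a)"

lemma Lop_ef:
  assumes "a < n"
  shows "Lop n s (ef n s a) = Polynomial.smult (real (n+1) * (s + real (a+1))) (ef n s a)"
proof -
  define y :: "real poly" where "y = [:1,1:]"
  define g :: "real poly" where "g = [: s + real (n+1), s :]"
  define b where "b = n - 1 - a"
  define c :: "real poly" where "c = [: real (n+1) + 2*s, - s * real (n-1) :]"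
  have yg: "[: real (n+1) + s, real (n+1) + 2*s, s :] = y * g"
    by (simp add: y_def g_def algebra_simps)
  have py: "pderiv y = 1" by (simp add: y_def pderiv_pCons)
  have pg: "pderiv g = [:s:]" by (simp add: g_def pderiv_pCons)
  have "Lop n s (ef n s a) = y * g * (y^a * pderiv (g^b) + g^b * pderiv (y^a)) + c * (y^a * g^b)"
    unfolding Lop_def ef_def yg pderiv_mult by (simp add: y_def g_def b_def c_def)
  also have "\<dots> = y^a * y * (g * pderiv (g^b)) + g^b * g * (y * pderiv (y^a)) + c * (y^a * g^b)"
    by (simp add: algebra_simps)
  also have "\<dots> = (y^a * g^b) * (Polynomial.smult (of_nat b) (y * [:s:]) + Polynomial.smult (of_nat a) g + c)"
    unfolding p_pderiv_pow py pg by (simp add: algebra_simps)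
  also have "Polynomial.smult (of_nat b) (y * [:s:]) + Polynomial.smult (of_nat a) g + c = [: real (n+1) * (s + real (a+1)) :]"
    using assms by (simp add: y_def g_def c_def b_def of_nat_diff algebra_simps)
  finally show ?thesis by (simp add: ef_def y_def g_def b_def)
qed

lemma roots_prod_dvd:
  fixes r :: "'b \<Rightarrow> real"
  assumes "finite S" "inj_on r S" "\<forall>k\<in>S. poly q (r k) = 0"
  shows "(\<Prod>k\<in>S. [:- r k, 1:]) dvd q"
  using assms
proof (induction S arbitrary: q rule: finite_induct)
  case empty then show ?case by simp
next
  case (insert x F)
  have "[:- r x, 1:] dvd q" using insert.prems poly_eq_0_iff_dvd by auto
  then obtain q' where q: "q = [:- r x, 1:] * q'" by (auto elim: dvdE)
  have "\<forall>k\<in>F. poly q' (r k) = 0"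
  proof
    fix k assume k: "k \<in> F"
    then have "r k \<noteq> r x" using insert by (auto simp: inj_on_def)
    moreover have "poly q (r k) = 0" using insert.prems k by auto
    ultimately show "poly q' (r k) = 0" by (simp add: q)
  qed
  then have "(\<Prod>k\<in>F. [:- r k, 1:]) dvd q'" using insert by (auto simp: inj_on_def)
  then have "[:- r x, 1:] * (\<Prod>k\<in>F. [:- r k, 1:]) dvd [:- r x, 1:] * q'"
    by (rule mult_dvd_mono[OF dvd_refl])
  then show ?case using insert(1,2) by (simp add: q)
qed

lemma monic_dvd_eq:
  fixes p q :: "real poly"
  assumes "p dvd q" "q \<noteq> 0" "degree p = degree q" "lead_coeff p = 1" "lead_coeff q = 1"
  shows "p = q"
proof -
  obtain h where q: "q = p * h" using assms(1) by (auto elim: dvdE)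
  have h0: "h \<noteq> 0" "p \<noteq> 0" using assms(2) q by auto
  then have "degree h = 0" using assms(3) q degree_mult_eq[of p h] by simp
  then obtain c where "h = [:c:]" using degree0_coeffs by auto
  then have "h = 1" using assms(4,5) q by (cases "c = 0") (auto simp: lead_coeff_mult one_pCons)
  then show ?thesis using q by simp
qed

theorem lemmaA2:
  fixes n :: nat and s :: real
  assumes "n \<ge> 1"
  shows "char_poly (C_mat n s) = (\<Prod>k = 1..n. [: - ((s + real k) * real (n + 1)), 1 :])"
proof -
  define Cn where "Cn = C_mat n s"
  have Cc: "Cn \<in> carrier_mat n n" by (simp add: Cn_def C_mat_def A_mat_def B_mat_def)
  define T where "T = transpose_mat Cn"
  have Tc: "T \<in> carrier_mat n n" using Cc by (simp add: T_def)
  have root: "poly (char_poly Cn) ((s + real k) * real (n + 1)) = 0" if k: "k \<in> {1..n}" for k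
  proof -
    define a where "a = k - 1"
    have a: "a < n" "k = a + 1" using k by (auto simp: a_def)
    define f where "f = ef n s a"
    define v where "v = vec n (\<lambda>j. coeff f j)"
    have f0: "f \<noteq> 0"
    proof -
      have "[: s + real (n+1), s :] \<noteq> 0" by (cases "s = 0") auto
      then show ?thesis by (simp add: f_def ef_def)
    qed
    have df: "degree f < n"
    proof -
      have "degree f \<le> degree ([:1,1:] ^ a :: real poly) + degree ([: s + real (n+1), s :] ^ (n - 1 - a))"
        unfolding f_def ef_def by (rule degree_mult_le)
      also have "\<dots> \<le> a + (n - 1 - a)"
        by (intro add_mono order.trans[OF degree_power_le]) auto
      finally show ?thesis using a by linarith
    qed
    have vc: "v \<in> carrier_vec n" by (simp add: v_def)
    have v0: "v \<noteq> 0\<^sub>v n"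
    proof
      assume "v = 0\<^sub>v n"
      then have "v $ degree f = 0" using df by simp
      then have "coeff f (degree f) = 0" using df by (simp add: v_def)
      then show False using f0 by simp
    qed
    have "T *\<^sub>v v = (real (n+1) * (s + real (a+1))) \<cdot>\<^sub>v v"
    proof (rule eq_vecI)
      fix i assume i: "i < dim_vec ((real (n+1) * (s + real (a+1))) \<cdot>\<^sub>v v)"
      then have i': "i < n" by (simp add: v_def)
      have "(T *\<^sub>v v) $ i = (\<Sum>j<n. Cn $$ (j, i) * coeff f j)"
        using i' Cc unfolding T_def v_def
        by (simp add: scalar_prod_def lessThan_atLeast0)
      also have "\<dots> = coeff (Lop n s f) i" unfolding Cn_def by (rule mult_T[OF df i'])
      also have "\<dots> = ((real (n+1) * (s + real (a+1))) \<cdot>\<^sub>v v) $ i"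
        using i' by (simp add: f_def Lop_ef[OF a(1)] v_def)
      finally show "(T *\<^sub>v v) $ i = ((real (n+1) * (s + real (a+1))) \<cdot>\<^sub>v v) $ i" .
    qed (use Tc in \<open>simp add: v_def\<close>)
    then have "eigenvalue T (real (n+1) * (s + real (a+1)))"
      unfolding eigenvalue_def eigenvector_def using vc v0 Tc by auto
    then have "poly (char_poly T) (real (n+1) * (s + real (a+1))) = 0"
      using eigenvalue_root_char_poly[OF Tc] by simp
    then show ?thesis using Cc a by (simp add: T_def mult.commute)
  qed
  define r where "r = (\<lambda>k::nat. (s + real k) * real (n + 1))"
  have inj: "inj_on r {1..n}" by (auto simp: inj_on_def r_def)
  have dvd: "(\<Prod>k = 1..n. [: - r k, 1 :]) dvd char_poly Cn"
    by (rule roots_prod_dvd) (use inj root in \<open>auto simp: r_def\<close>)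
  have dm: "degree (char_poly Cn) = n \<and> coeff (char_poly Cn) n = 1"
    by (rule degree_monic_char_poly[OF Cc])
  have dp: "degree (\<Prod>k = 1..n. [: - r k, 1 :]) = n"
    by (subst degree_prod_eq_sum_degree) auto
  have lp: "lead_coeff (\<Prod>k = 1..n. [: - r k, 1 :]) = 1"
    by (simp add: lead_coeff_prod)
  have "(\<Prod>k = 1..n. [: - r k, 1 :]) = char_poly Cn"
    by (rule monic_dvd_eq[OF dvd]) (use dm dp lp in auto)
  then show ?thesis by (simp add: r_def Cn_def)
qed

end
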